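(* Let $G=(V,E)$ be a graph with vertex set $V=\{1,\ldots,n\}$. Let $G'$ be the digraph obtained by orienting each edge $\{i,j\}$ as the arc $(\min\{i,j\},\max\{i,j\})$. For each vertex $i$ let $n_i$ be its number of outgoing arcs in $G'$, let $\hat n_i=0$ if $n_i=0$ and $\hat n_i=\lceil\log n_i\rceil$ otherwise, and let $q=\sum_{i=1}^n\hat n_i$. Let $x_1,\ldots,x_q$ be distinct indeterminates, partitioned into consecutive blocks, the $i$-th block consisting of $\hat n_i$ indeterminates $x_{s_i+1},\ldots,x_{s_i+\hat n_i}$ where $s_i=\sum_{h<i}\hat n_h$. Label the outgoing arcs of vertex $i$ as follows: if $n_i=1$, its unique outgoing arc is labeled $1$; if $n_i\ge 2$, its $n_i$ outgoing arcs are labeled by pairwise distinct monomials of the form $\prod_{h=1}^{\hat n_i}x_{s_i+h}^{a_h}$ with each $a_h\in\{0,1\}$. Let $f_{i,j}$ denote the label of arc $(i,j)$, and let $Q(x_1,\ldots,x_q)$ be the polynomial obtained from $\mathrm{Pf}(G)$ by replacing each indeterminate $y_{i,j}$ by $f_{i,j}$. Then $G$ has a perfect matching if and only if $Q(x_1,\ldots,x_q)\not\equiv 0$.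
   Context: $\log$ is to base 2. A perfect matching of $G$ is a set $L$ of edges such that every vertex is incident to exactly one edge of $L$. For each edge $\{i,j\}$ with $i<j$ there is an indeterminate $y_{i,j}$. For a perfect matching $L=\{\{i_1,j_1\},\ldots,\{i_{n/2},j_{n/2}\}\}$ written with $i_r<j_r$ for all $r$ and $i_1<i_2<\cdots<i_{n/2}$, let $\pi(L)=y_{i_1,j_1}\cdots y_{i_{n/2},j_{n/2}}$ and let $\sigma(L)\in\{1,-1\}$ be the sign of the permutation $1\mapsto i_1,2\mapsto j_1,\ldots,n-1\mapsto i_{n/2},n\mapsto j_{n/2}$. Then $\mathrm{Pf}(G)=\sum_L\sigma(L)\pi(L)$, the sum over all perfect matchings $L$ of $G$. *)

theory Defs
  imports Complex_Main "HOL-Library.Poly_Mapping" "HOL-Combinatorics.Permutations"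
begin

definition simple_graph :: "nat \<Rightarrow> nat set set \<Rightarrow> bool" where
  "simple_graph n E \<longleftrightarrow> (\<forall>e\<in>E. \<exists>i j. e = {i, j} \<and> 1 \<le> i \<and> i < j \<and> j \<le> n)"

definition perfect_matching :: "nat \<Rightarrow> nat set set \<Rightarrow> nat set set \<Rightarrow> bool" where
  "perfect_matching n E L \<longleftrightarrow> L \<subseteq> E \<and> (\<forall>v\<in>{1..n}. \<exists>!e. e \<in> L \<and> v \<in> e)"

definition partner :: "nat set set \<Rightarrow> nat \<Rightarrow> nat" where
  "partner L i = (THE j. j \<noteq> i \<and> {i, j} \<in> L)"

(* The permutation 2r-1 -> i_r, 2r -> j_r (identity outside {1..n}),
  where i_1 < ... < i_{n/2} are the smaller endpoints of the edges of L. *)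
definition matching_perm :: "nat \<Rightarrow> nat set set \<Rightarrow> nat \<Rightarrow> nat" where
  "matching_perm n L k =
     (if k \<in> {1..n} then
        (let r = (k + 1) div 2;
             i = sorted_list_of_set (Min ` L) ! (r - 1)
         in if odd k then i else partner L i)
      else k)"

definition matching_sign :: "nat \<Rightarrow> nat set set \<Rightarrow> int" where
  "matching_sign n L = sign (matching_perm n L)"

definition out_nbrs :: "nat set set \<Rightarrow> nat \<Rightarrow> nat set" where
  "out_nbrs E i = {j. i < j \<and> {i, j} \<in> E}"

definition outdeg :: "nat set set \<Rightarrow> nat \<Rightarrow> nat" where
  "outdeg E i = card (out_nbrs E i)"

definition nhat :: "nat set set \<Rightarrow> nat \<Rightarrow> nat" where
  "nhat E i = (if outdeg E i = 0 then 0 else nat \<lceil>log 2 (real (outdeg E i))\<rceil>)"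

definition offset :: "nat set set \<Rightarrow> nat \<Rightarrow> nat" where
  "offset E i = (\<Sum>h\<in>{1..<i}. nhat E h)"

(* Monomials in x_1, x_2, ... are exponent vectors (nat =>0 nat); the monomial 1 is 0.
  A labelling f assigns to arc (i,j) the monomial f i j. *)
definition valid_labelling :: "nat \<Rightarrow> nat set set \<Rightarrow> (nat \<Rightarrow> nat \<Rightarrow> (nat \<Rightarrow>\<^sub>0 nat)) \<Rightarrow> bool" where
  "valid_labelling n E f \<longleftrightarrow>
     (\<forall>i\<in>{1..n}.
        (outdeg E i = 1 \<longrightarrow> (\<forall>j\<in>out_nbrs E i. f i j = 0)) \<and>
        (outdeg E i \<ge> 2 \<longrightarrow>
           inj_on (f i) (out_nbrs E i) \<and>
           (\<forall>j\<in>out_nbrs E i. \<forall>k.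
              Poly_Mapping.lookup (f i j) k \<le> 1 \<and>
              (Poly_Mapping.lookup (f i j) k \<noteq> 0 \<longrightarrow>
                 k \<in> {offset E i + 1 .. offset E i + nhat E i}))))"

(* The polynomial Q = Pf(G)[y_{i,j} := f_{i,j}], as a finitely supported map
  from monomials to integer coefficients. *)
definition Q_poly :: "nat \<Rightarrow> nat set set \<Rightarrow> (nat \<Rightarrow> nat \<Rightarrow> (nat \<Rightarrow>\<^sub>0 nat)) \<Rightarrow> ((nat \<Rightarrow>\<^sub>0 nat) \<Rightarrow>\<^sub>0 int)" where
  "Q_poly n E f =
     (\<Sum>L\<in>{L. perfect_matching n E L}.
        Poly_Mapping.single (\<Sum>e\<in>L. f (Min e) (Max e)) (matching_sign n L))"

end

theory Submission
  imports Defs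
begin

lemma sg_edge:
  assumes "simple_graph n E" "e \<in> E"
  obtains i j where "e = {i, j}" "1 \<le> i" "i < j" "j \<le> n"
  using assms unfolding simple_graph_def by blast

lemma sg_finite:
  assumes "simple_graph n E"
  shows "finite E"
proof -
  have "E \<subseteq> Pow {1..n}"
    using assms unfolding simple_graph_def by fastforce
  then show ?thesis by (rule finite_subset) simp
qed

lemma out_nbrs_finite:
  assumes "simple_graph n E"
  shows "finite (out_nbrs E i)"
proof -
  have "out_nbrs E i \<subseteq> {1..n}"
  proof
    fix j assume "j \<in> out_nbrs E i"
    then have "i < j" "{i, j} \<in> E" by (auto simp: out_nbrs_def)
    then obtain a b where "{i, j} = {a, b}" "1 \<le> a" "a < b" "b \<le> n"
      using assms sg_edge by metis
    then show "j \<in> {1..n}" using \<open>i < j\<close> by (auto simp: doubleton_eq_iff)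
  qed
  then show ?thesis by (rule finite_subset) simp
qed

lemma offset_le:
  assumes "1 \<le> i'" "i' < i"
  shows "offset E i' + nhat E i' \<le> offset E i"
proof -
  have "offset E i' + nhat E i' = (\<Sum>h\<in>{1..<Suc i'}. nhat E h)"
    unfolding offset_def using assms(1) by simp
  also have "\<dots> \<le> (\<Sum>h\<in>{1..<i}. nhat E h)"
    by (rule sum_mono2) (use assms in auto)
  finally show ?thesis unfolding offset_def .
qed

lemma blocks_disjoint:
  assumes "1 \<le> i" "1 \<le> i'" "i \<noteq> i'"
    "offset E i < k" "k \<le> offset E i + nhat E i"
    "offset E i' < k" "k \<le> offset E i' + nhat E i'"
  shows False
proof (cases "i < i'")
  case True
  show ?thesis using offset_le[OF assms(1) True, of E] assms by linarith
next
  case False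
  have lt: "i' < i" using False assms by linarith
  show ?thesis using offset_le[OF assms(2) lt, of E] assms by linarith
qed

lemma pm_unique:
  assumes "perfect_matching n E L" "v \<in> {1..n}" "e \<in> L" "v \<in> e" "e' \<in> L" "v \<in> e'"
  shows "e = e'"
  using assms unfolding perfect_matching_def by metis

lemma label_zero_outside:
  assumes sg: "simple_graph n E" and vl: "valid_labelling n E f"
    and "{i, j} \<in> E" "i < j"
    and nz: "Poly_Mapping.lookup (f i j) k \<noteq> 0"
  shows "outdeg E i \<ge> 2 \<and> offset E i < k \<and> k \<le> offset E i + nhat E i"
proof -
  obtain a b where ab: "{i, j} = {a, b}" "1 \<le> a" "a < b" "b \<le> n"
    using sg assms(3) sg_edge by metis
  then have ij: "a = i" "b = j" using \<open>i < j\<close> by (auto simp: doubleton_eq_iff)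
  have jin: "j \<in> out_nbrs E i" using assms(3,4) by (simp add: out_nbrs_def)
  have "outdeg E i \<noteq> 0"
    using out_nbrs_finite[OF sg, of i] jin unfolding outdeg_def by auto
  moreover have iin: "i \<in> {1..n}" using ab ij by auto
  moreover have "outdeg E i \<noteq> 1"
  proof
    assume "outdeg E i = 1"
    then have "f i j = 0" using vl iin jin unfolding valid_labelling_def by blast
    then show False using nz by simp
  qed
  ultimately have d: "outdeg E i \<ge> 2" by linarith
  then have "k \<in> {offset E i + 1 .. offset E i + nhat E i}"
    using vl iin jin nz unfolding valid_labelling_def by blast
  then show ?thesis using d by auto
qed

lemma lookup_m:
  assumes sg: "simple_graph n E" and vl: "valid_labelling n E f"
    and pm: "perfect_matching n E L" and e0: "{i, a} \<in> L" and ia: "i < a"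
    and k1: "offset E i < k" and k2: "k \<le> offset E i + nhat E i"
  shows "Poly_Mapping.lookup (\<Sum>e\<in>L. f (Min e) (Max e)) k = Poly_Mapping.lookup (f i a) k"
proof -
  have LE: "L \<subseteq> E" using pm unfolding perfect_matching_def by blast
  have finL: "finite L" using sg_finite[OF sg] LE finite_subset by blast
  have "Poly_Mapping.lookup (\<Sum>e\<in>L. f (Min e) (Max e)) k =
        (\<Sum>e\<in>L. Poly_Mapping.lookup (f (Min e) (Max e)) k)"
    by (simp add: lookup_sum)
  also have "\<dots> = Poly_Mapping.lookup (f (Min {i, a}) (Max {i, a})) k +
        (\<Sum>e\<in>L - {{i, a}}. Poly_Mapping.lookup (f (Min e) (Max e)) k)"
    using finL e0 by (simp add: sum.remove)
  also have "(\<Sum>e\<in>L - {{i, a}}. Poly_Mapping.lookup (f (Min e) (Max e)) k) = 0"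
  proof (rule sum.neutral, rule ballI)
    fix e assume e: "e \<in> L - {{i, a}}"
    then have eE: "e \<in> E" using LE by blast
    obtain i' j' where ij': "e = {i', j'}" "1 \<le> i'" "i' < j'" "j' \<le> n"
      using sg eE sg_edge by metis
    have mm: "Min e = i'" "Max e = j'" using ij' by auto
    have iin: "i \<in> {1..n}"
    proof -
      obtain p q where "{i, a} = {p, q}" "1 \<le> p" "p < q" "q \<le> n"
        using sg e0 LE sg_edge by blast
      then show ?thesis using ia by (auto simp: doubleton_eq_iff)
    qed
    have "i' \<noteq> i"
    proof
      assume "i' = i"
      then have "e = {i, a}" using pm_unique[OF pm iin, of e "{i, a}"] e e0 ij' by auto
      then show False using e by blast
    qed
    show "Poly_Mapping.lookup (f (Min e) (Max e)) k = 0"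
    proof (rule ccontr)
      assume "Poly_Mapping.lookup (f (Min e) (Max e)) k \<noteq> 0"
      then have "offset E i' < k \<and> k \<le> offset E i' + nhat E i'"
        using label_zero_outside[OF sg vl, of i' j' k] eE ij' mm by auto
      then show False
        using blocks_disjoint[of i i' E k] iin ij' \<open>i' \<noteq> i\<close> k1 k2 by auto
    qed
  qed
  finally show ?thesis using ia by simp
qed

lemma label_eq:
  assumes sg: "simple_graph n E" and vl: "valid_labelling n E f"
    and pm: "perfect_matching n E L" and pm': "perfect_matching n E L'"
    and eq: "(\<Sum>e\<in>L. f (Min e) (Max e)) = (\<Sum>e\<in>L'. f (Min e) (Max e))"
    and e0: "{i, a} \<in> L" and ia: "i < a" and e1: "{i, b} \<in> L'" and ib: "i < b"
  shows "f i a = f i b"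
proof (rule poly_mapping_eqI)
  fix k
  have aE: "{i, a} \<in> E" using pm e0 unfolding perfect_matching_def by blast
  have bE: "{i, b} \<in> E" using pm' e1 unfolding perfect_matching_def by blast
  show "Poly_Mapping.lookup (f i a) k = Poly_Mapping.lookup (f i b) k"
  proof (cases "offset E i < k \<and> k \<le> offset E i + nhat E i")
    case True
    then show ?thesis
      using lookup_m[OF sg vl pm e0 ia] lookup_m[OF sg vl pm' e1 ib] eq by metis
  next
    case False
    then have "Poly_Mapping.lookup (f i a) k = 0" "Poly_Mapping.lookup (f i b) k = 0"
      using label_zero_outside[OF sg vl aE ia, of k] label_zero_outside[OF sg vl bE ib, of k]
      by auto
    then show ?thesis by simp
  qed
qed

lemma m_inj:
  assumes sg: "simple_graph n E" and vl: "valid_labelling n E f"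
    and pm: "perfect_matching n E L" and pm': "perfect_matching n E L'"
    and eq: "(\<Sum>e\<in>L. f (Min e) (Max e)) = (\<Sum>e\<in>L'. f (Min e) (Max e))"
  shows "L = L'"
proof (rule ccontr)
  assume ne: "L \<noteq> L'"
  have LE: "L \<subseteq> E" and LE': "L' \<subseteq> E" using pm pm' unfolding perfect_matching_def by auto
  define D where "D = {v\<in>{1..n}. \<exists>e\<in>L. v \<in> e \<and> e \<notin> L'}"
  have "D \<noteq> {}"
  proof
    assume D0: "D = {}"
    have sub: "L \<subseteq> L'"
    proof
      fix e assume "e \<in> L"
      then obtain p q where "e = {p, q}" "1 \<le> p" "p < q" "q \<le> n"
        using LE sg sg_edge by blast
      then show "e \<in> L'" using D0 \<open>e \<in> L\<close> unfolding D_def by auto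
    qed
    have "L' \<subseteq> L"
    proof
      fix e assume eL': "e \<in> L'"
      then obtain p q where pq: "e = {p, q}" "1 \<le> p" "p < q" "q \<le> n"
        using LE' sg sg_edge by blast
      then have pin: "p \<in> {1..n}" by auto
      obtain e2 where "e2 \<in> L" "p \<in> e2" using pm pin unfolding perfect_matching_def by blast
      then have "e2 \<in> L'" using sub by blast
      then have "e2 = e" using pm_unique[OF pm' pin] \<open>p \<in> e2\<close> eL' pq by auto
      then show "e \<in> L" using \<open>e2 \<in> L\<close> by simp
    qed
    then show False using sub ne by blast
  qed
  define i where "i = Min D"
  have finD: "finite D" unfolding D_def by simp
  have iD: "i \<in> D" using \<open>D \<noteq> {}\<close> finD unfolding i_def by simp
  have imin: "\<And>v. v \<in> D \<Longrightarrow> i \<le> v" using finD unfolding i_def by simp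
  obtain e where eL: "e \<in> L" and ie: "i \<in> e" and enL': "e \<notin> L'" using iD unfolding D_def by blast
  have iin: "i \<in> {1..n}" using iD unfolding D_def by blast
  obtain e' where e'L': "e' \<in> L'" and ie': "i \<in> e'" using pm' iin unfolding perfect_matching_def by blast
  have e'nL: "e' \<notin> L"
  proof
    assume "e' \<in> L"
    then have "e' = e" using pm_unique[OF pm iin] eL ie ie' by blast
    then show False using e'L' enL' by simp
  qed
  obtain p q where pq: "e = {p, q}" "1 \<le> p" "p < q" "q \<le> n" using eL LE sg sg_edge by blast
  obtain p' q' where pq': "e' = {p', q'}" "1 \<le> p'" "p' < q'" "q' \<le> n" using e'L' LE' sg sg_edge by blast
  have ip: "i = p"
  proof (rule ccontr)
    assume "i \<noteq> p"
    then have "i = q" using ie pq by auto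
    have "p \<in> D" using pq eL enL' unfolding D_def by auto
    then show False using imin[of p] \<open>i = q\<close> pq by auto
  qed
  have ip': "i = p'"
  proof (rule ccontr)
    assume "i \<noteq> p'"
    then have iq: "i = q'" using ie' pq' by auto
    have p'in: "p' \<in> {1..n}" using pq' by auto
    obtain e2 where e2: "e2 \<in> L" "p' \<in> e2" using pm p'in unfolding perfect_matching_def by blast
    have "e2 \<noteq> e'" using e2 e'nL by blast
    then have "e2 \<notin> L'" using pm_unique[OF pm' p'in, of e2 e'] e2 e'L' pq' by blast
    then have "p' \<in> D" using e2 p'in unfolding D_def by auto
    then show False using imin[of p'] iq pq' by auto
  qed
  have fe: "f i q = f i q'"
    using label_eq[OF sg vl pm pm' eq, of i q q'] eL e'L' pq pq' ip ip' by auto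
  have qo: "q \<in> out_nbrs E i" "q' \<in> out_nbrs E i"
    using eL e'L' LE LE' pq pq' ip ip' by (auto simp: out_nbrs_def)
  have qq: "q \<noteq> q'" using pq pq' ip ip' eL e'nL by auto
  have "card {q, q'} \<le> outdeg E i"
    unfolding outdeg_def by (rule card_mono[OF out_nbrs_finite[OF sg]]) (use qo in auto)
  then have "outdeg E i \<ge> 2" using qq by simp
  then have "inj_on (f i) (out_nbrs E i)" using vl iin unfolding valid_labelling_def by blast
  then show False using fe qo qq by (meson inj_onD)
qed

theorem lemma3p1:
  fixes n :: nat and E :: "nat set set" and f :: "nat \<Rightarrow> nat \<Rightarrow> (nat \<Rightarrow>\<^sub>0 nat)"
  assumes "simple_graph n E"
    and "valid_labelling n E f"
  shows "(\<exists>L. perfect_matching n E L) \<longleftrightarrow> Q_poly n E f \<noteq> 0"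
proof
  assume "\<exists>L. perfect_matching n E L"
  then obtain L0 where L0: "perfect_matching n E L0" by blast
  define S where "S = {L. perfect_matching n E L}"
  define m where "m L = (\<Sum>e\<in>L. f (Min e) (Max e))" for L
  have finS: "finite S"
  proof -
    have "S \<subseteq> Pow E" unfolding S_def perfect_matching_def by blast
    then show ?thesis using sg_finite[OF assms(1)] finite_subset by blast
  qed
  have L0S: "L0 \<in> S" using L0 S_def by simp
  have "Poly_Mapping.lookup (Q_poly n E f) (m L0) =
        (\<Sum>L\<in>S. Poly_Mapping.lookup (Poly_Mapping.single (m L) (matching_sign n L)) (m L0))"
    unfolding Q_poly_def S_def m_def by (simp add: lookup_sum)
  also have "\<dots> = (\<Sum>L\<in>S. if L = L0 then matching_sign n L else 0)"
  proof (rule sum.cong[OF refl])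
    fix L assume "L \<in> S"
    then have "m L = m L0 \<longleftrightarrow> L = L0"
      using m_inj[OF assms, of L L0] L0 unfolding S_def m_def by auto
    then show "Poly_Mapping.lookup (Poly_Mapping.single (m L) (matching_sign n L)) (m L0) =
        (if L = L0 then matching_sign n L else 0)"
      by (simp add: lookup_single)
  qed
  also have "\<dots> = matching_sign n L0" using finS L0S by simp
  finally have "Poly_Mapping.lookup (Q_poly n E f) (m L0) \<noteq> 0"
    by (simp add: matching_sign_def)
  then show "Q_poly n E f \<noteq> 0" by auto
next
  assume "Q_poly n E f \<noteq> 0"
  show "\<exists>L. perfect_matching n E L"
  proof (rule ccontr)
    assume "\<nexists>L. perfect_matching n E L"
    then have c0: "Collect (perfect_matching n E) = {}" by blast
    show False using \<open>Q_poly n E f \<noteq> 0\<close> unfolding Q_poly_def c0 by simp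
  qed
qed

end
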